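(* Let $s,u>0$ and $\nu_0=0$. For $\gamma>0$ let $\bar y_2(s,\gamma,u)=\frac12\big(1+\frac s\gamma-\sqrt{(1+s/\gamma)^2-4u/\gamma}\big)$. Then $$\lim_{\gamma\to0}\bar y_2(s,\gamma,u)=\frac us .$$ Moreover, denoting by $y_\infty(y_0,s,\gamma,u)=\lim_{t\to\infty}y(t;y_0)$ the long-term limit of the solution of $\dot y=-y(1-y)[s+\gamma(1-y)]+u(1-y)$, $y(0)=y_0\in[0,1]$, we have $$\lim_{\gamma\to0}y_\infty(y_0,s,\gamma,u)=\begin{cases}\min\{u/s,1\}, & y_0\in[0,1),\\ 1, & y_0=1.\end{cases}$$ *)

theory Defs
  imports Complex_Main
begin

definition ybar2 :: "real \<Rightarrow> real \<Rightarrow> real \<Rightarrow> real" where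
  "ybar2 s \<gamma> u = 1/2 * (1 + s/\<gamma> - sqrt ((1 + s/\<gamma>)^2 - 4*u/\<gamma>))"

definition odeF :: "real \<Rightarrow> real \<Rightarrow> real \<Rightarrow> real \<Rightarrow> real" where
  "odeF s \<gamma> u y = - y * (1 - y) * (s + \<gamma> * (1 - y)) + u * (1 - y)"

definition is_solution :: "real \<Rightarrow> real \<Rightarrow> real \<Rightarrow> real \<Rightarrow> (real \<Rightarrow> real) \<Rightarrow> bool" where
  "is_solution s \<gamma> u y0 y \<longleftrightarrow> y 0 = y0 \<and>
     (\<forall>t\<ge>0. (y has_real_derivative odeF s \<gamma> u (y t)) (at t within {0..}))"

definition y_infty :: "(real \<Rightarrow> real) \<Rightarrow> real" where
  "y_infty y = Lim at_top y"

end

theory Submission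
  imports Defs "HOL-Analysis.Analysis"
begin

lemma deriv_lb:
  fixes phi phi' :: "real \<Rightarrow> real"
  assumes "a \<le> b"
    and d: "\<And>x. x \<in> {a..b} \<Longrightarrow> (phi has_real_derivative phi' x) (at x within {a..b})"
    and m: "\<And>x. x \<in> {a..b} \<Longrightarrow> phi' x \<ge> m"
  shows "phi b - phi a \<ge> m * (b - a)"
proof -
  obtain x where x: "x \<in> {a..b}" "phi b - phi a = (\<lambda>h. phi' x * h) (b - a)"
    using mvt_very_simple[of a b phi "\<lambda>x h. phi' x * h"] assms(1) d
    unfolding has_field_derivative_def by auto
  have "m * (b - a) \<le> phi' x * (b - a)"
    using m[OF x(1)] assms(1) by (simp add: mult_right_mono)
  then show ?thesis using x by simp
qed

lemma deriv_ub:
  fixes phi phi' :: "real \<Rightarrow> real"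
  assumes "a \<le> b"
    and d: "\<And>x. x \<in> {a..b} \<Longrightarrow> (phi has_real_derivative phi' x) (at x within {a..b})"
    and m: "\<And>x. x \<in> {a..b} \<Longrightarrow> phi' x \<le> M"
  shows "phi b - phi a \<le> M * (b - a)"
proof -
  have "(-phi b) - (-phi a) \<ge> (-M) * (b - a)"
    by (rule deriv_lb[of a b "\<lambda>x. - phi x" "\<lambda>x. - phi' x"]) (use assms in \<open>auto intro!: derivative_eq_intros\<close>)
  then show ?thesis by simp
qed

lemma sol_cont:
  assumes der: "\<forall>t\<ge>0. (y has_real_derivative F (y t)) (at t within {0..})"
  shows "continuous_on {0..} y"
  by (rule DERIV_continuous_on[where D="\<lambda>t. F (y t)"]) (use der in auto)

lemma sol_der_sub:
  assumes der: "\<forall>t\<ge>0. (y has_real_derivative F (y t)) (at t within {0..})"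
    and "0 \<le> a" "x \<in> {a..b}"
  shows "(y has_real_derivative F (y x)) (at x within {a..b})"
proof -
  have "(y has_real_derivative F (y x)) (at x within {0..})" using der assms by auto
  then show ?thesis by (rule DERIV_subset) (use assms in auto)
qed

lemma ode_unique:
  fixes y F Q :: "real \<Rightarrow> real"
  assumes der: "\<forall>t\<ge>0. (y has_real_derivative F (y t)) (at t within {0..})"
    and FQ: "\<And>x. F x = (x - e) * Q x" and Qc: "continuous_on UNIV Q"
    and t0: "t0 \<ge> 0" "y t0 = e" and t: "t \<ge> 0"
  shows "y t = e"
proof -
  define T where "T = max t t0"
  have yc: "continuous_on {0..T} y"
    using sol_cont[OF der] by (rule continuous_on_subset) auto
  have c2: "continuous_on {0..T} (\<lambda>\<tau>. \<bar>Q (y \<tau>)\<bar>)"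
    by (intro continuous_intros continuous_on_compose2[OF Qc yc]) auto
  obtain xm where xm: "xm \<in> {0..T}" "\<And>\<tau>. \<tau> \<in> {0..T} \<Longrightarrow> \<bar>Q (y \<tau>)\<bar> \<le> \<bar>Q (y xm)\<bar>"
    using continuous_attains_sup[OF compact_Icc _ c2] t unfolding T_def by fastforce
  define K where "K = \<bar>Q (y xm)\<bar>"
  have K: "\<And>\<tau>. \<tau> \<in> {0..T} \<Longrightarrow> \<bar>Q (y \<tau>)\<bar> \<le> K" "K \<ge> 0" using xm K_def by auto
  have dy: "\<And>\<tau> a b. 0 \<le> a \<Longrightarrow> \<tau> \<in> {a..b} \<Longrightarrow> (y has_real_derivative F (y \<tau>)) (at \<tau> within {a..b})"
    using sol_der_sub[OF der] by blast
  show ?thesis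
  proof (cases "t0 \<le> t")
    case True
    define phi where "phi \<tau> = (y \<tau> - e)^2 * exp (-2*K*\<tau>)" for \<tau>
    have "phi t - phi t0 \<le> 0 * (t - t0)"
    proof (rule deriv_ub[OF True])
      fix x assume x: "x \<in> {t0..t}"
      show "(phi has_real_derivative (2 * (y x - e) * F (y x) * exp (-2*K*x) + (y x - e)^2 * (exp (-2*K*x) * (-2*K)))) (at x within {t0..t})"
        unfolding phi_def
        by (rule derivative_eq_intros dy[OF t0(1) x] refl | simp)+
      have q: "Q (y x) \<le> K" using K(1)[of x] x T_def t0 by auto
      have "2 * (y x - e) * F (y x) * exp (-2*K*x) + (y x - e)^2 * (exp (-2*K*x) * (-2*K))
          = 2 * ((y x - e)^2 * exp (-2*K*x)) * (Q (y x) - K)"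
        by (simp add: FQ power2_eq_square algebra_simps)
      also have "\<dots> \<le> 0" using q by (intro mult_nonneg_nonpos) auto
      finally show "2 * (y x - e) * F (y x) * exp (-2*K*x) + (y x - e)^2 * (exp (-2*K*x) * (-2*K)) \<le> 0" .
    qed
    then have "phi t \<le> 0" using t0 by (simp add: phi_def)
    then have "(y t - e)^2 \<le> 0" unfolding phi_def
      by (simp add: mult_le_0_iff)
    then show ?thesis by simp
  next
    case False
    define phi where "phi \<tau> = (y \<tau> - e)^2 * exp (2*K*\<tau>)" for \<tau>
    have "phi t0 - phi t \<ge> 0 * (t0 - t)"
    proof (rule deriv_lb)
      show "t \<le> t0" using False by simp
      fix x assume x: "x \<in> {t..t0}"
      show "(phi has_real_derivative (2 * (y x - e) * F (y x) * exp (2*K*x) + (y x - e)^2 * (exp (2*K*x) * (2*K)))) (at x within {t..t0})"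
        unfolding phi_def
        by (rule derivative_eq_intros dy[OF t x] refl | simp)+
      have q: "- K \<le> Q (y x)" using K(1)[of x] x T_def t by auto
      have "2 * (y x - e) * F (y x) * exp (2*K*x) + (y x - e)^2 * (exp (2*K*x) * (2*K))
          = 2 * ((y x - e)^2 * exp (2*K*x)) * (Q (y x) + K)"
        by (simp add: FQ power2_eq_square algebra_simps)
      also have "\<dots> \<ge> 0" using q by (intro mult_nonneg_nonneg) auto
      finally show "0 \<le> 2 * (y x - e) * F (y x) * exp (2*K*x) + (y x - e)^2 * (exp (2*K*x) * (2*K))" .
    qed
    then have "phi t \<le> 0" using t0 by (simp add: phi_def)
    then have "(y t - e)^2 \<le> 0" unfolding phi_def
      by (simp add: mult_le_0_iff)
    then show ?thesis by simp
  qed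
qed

lemma ode_conv_inc:
  fixes y F :: "real \<Rightarrow> real"
  assumes der: "\<forall>t\<ge>0. (y has_real_derivative F (y t)) (at t within {0..})"
    and Fc: "continuous_on UNIV F"
    and below: "\<forall>t\<ge>0. y t < c"
    and nn: "\<forall>t\<ge>0. F (y t) \<ge> 0"
    and pos: "\<And>x. y 0 \<le> x \<Longrightarrow> x < c \<Longrightarrow> F x > 0"
  shows "(y \<longlongrightarrow> c) at_top"
proof -
  have dy: "\<And>\<tau> a b. 0 \<le> a \<Longrightarrow> \<tau> \<in> {a..b} \<Longrightarrow> (y has_real_derivative F (y \<tau>)) (at \<tau> within {a..b})"
    using sol_der_sub[OF der] by blast
  have mono: "y a \<le> y b" if "0 \<le> a" "a \<le> b" for a b
  proof -
    have "y b - y a \<ge> 0 * (b - a)"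
      by (rule deriv_lb[OF that(2) dy[OF that(1)]]) (use nn that in auto)
    then show ?thesis by simp
  qed
  show ?thesis
  proof (rule order_tendstoI)
    fix a assume "c < a"
    then show "eventually (\<lambda>x. y x < a) at_top"
      using below unfolding eventually_at_top_linorder by (metis less_trans order_refl)
  next
    fix a assume a: "a < c"
    show "eventually (\<lambda>x. a < y x) at_top"
    proof (cases "a < y 0")
      case True
      then show ?thesis using mono unfolding eventually_at_top_linorder
        by (meson less_le_trans order_refl)
    next
      case False
      have Fc': "continuous_on {y 0..a} F" using Fc by (rule continuous_on_subset) auto
      obtain xm where xm: "xm \<in> {y 0..a}" "\<And>x. x \<in> {y 0..a} \<Longrightarrow> F xm \<le> F x"
        using continuous_attains_inf[OF compact_Icc _ Fc'] False by fastforce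
      define m where "m = F xm"
      have m: "m > 0" using pos xm(1) a unfolding m_def by auto
      have y0c: "y 0 < c" using below by auto
      define T where "T = (c - y 0) / m"
      have T: "T \<ge> 0" using m y0c unfolding T_def by auto
      have yT: "a < y T"
      proof (rule ccontr)
        assume "\<not> a < y T"
        then have yTa: "y T \<le> a" by simp
        have "y T - y 0 \<ge> m * (T - 0)"
        proof (rule deriv_lb[OF T dy[of 0]])
          fix x assume x: "x \<in> {0..T}"
          have "y 0 \<le> y x" "y x \<le> y T" using mono x by auto
          then show "m \<le> F (y x)" using xm(2)[of "y x"] yTa unfolding m_def by auto
        qed auto
        then have "y T \<ge> c" using m unfolding T_def by (simp add: field_simps)
        then show False using below T by force
      qed
      show ?thesis using mono T yT unfolding eventually_at_top_linorder
        by (meson less_le_trans)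
    qed
  qed
qed

lemma ode_conv_dec:
  fixes y F :: "real \<Rightarrow> real"
  assumes der: "\<forall>t\<ge>0. (y has_real_derivative F (y t)) (at t within {0..})"
    and Fc: "continuous_on UNIV F"
    and above: "\<forall>t\<ge>0. y t > c"
    and np: "\<forall>t\<ge>0. F (y t) \<le> 0"
    and neg: "\<And>x. x \<le> y 0 \<Longrightarrow> c < x \<Longrightarrow> F x < 0"
  shows "(y \<longlongrightarrow> c) at_top"
proof -
  have "((\<lambda>t. - y t) \<longlongrightarrow> - c) at_top"
  proof (rule ode_conv_inc[where F="\<lambda>x. - F (- x)"])
    show "\<forall>t\<ge>0. ((\<lambda>t. - y t) has_real_derivative - F (- (- y t))) (at t within {0..})"
      using der by (auto intro!: derivative_eq_intros)
    show "continuous_on UNIV (\<lambda>x. - F (- x))"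
      by (intro continuous_intros continuous_on_compose2[OF Fc]) auto
  qed (use above np neg in auto)
  then show ?thesis using tendsto_minus_cancel by blast
qed

lemma y_infty_const:
  assumes "\<forall>t\<ge>0. y t = c"
  shows "y_infty y = c"
proof -
  have "(y \<longlongrightarrow> c) at_top"
    by (rule tendsto_eventually) (use assms in \<open>auto simp: eventually_at_top_linorder\<close>)
  then show ?thesis unfolding y_infty_def by (intro tendsto_Lim) auto
qed

lemma y_infty_lim:
  assumes "(y \<longlongrightarrow> c) at_top"
  shows "y_infty y = c"
  unfolding y_infty_def by (intro tendsto_Lim assms) auto

lemma odeF_one: "odeF s g u x = (x - 1) * (-(u - s*x - g*x*(1-x)))"
  unfolding odeF_def by (simp add: algebra_simps)

lemma sol_der: "is_solution s g u y0 y \<Longrightarrow> \<forall>t\<ge>0. (y has_real_derivative odeF s g u (y t)) (at t within {0..})"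
  unfolding is_solution_def by auto

lemma odeF_cont: "continuous_on UNIV (odeF s g u)"
  unfolding odeF_def by (intro continuous_intros)

lemma never_hits:
  assumes der: "\<forall>t\<ge>0. (y has_real_derivative F (y t)) (at t within {0..})"
    and FQ: "\<And>x. F x = (x - e) * Q x" and Qc: "continuous_on UNIV Q"
    and "y 0 \<noteq> e" "t \<ge> 0"
  shows "y t \<noteq> e"
  using ode_unique[OF der FQ Qc, of t 0] assms by auto

lemma stays_below:
  assumes der: "\<forall>t\<ge>0. (y has_real_derivative F (y t)) (at t within {0..})"
    and ne: "\<forall>t\<ge>0. y t \<noteq> e" and "y 0 < e" and t: "t \<ge> 0"
  shows "y t < e"
proof (rule ccontr)
  assume "\<not> y t < e"
  then have "y 0 \<le> e" "e \<le> y t" using assms by auto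
  moreover have "continuous_on {0..t} y"
    using sol_cont[OF der] by (rule continuous_on_subset) auto
  ultimately obtain x where "0 \<le> x" "x \<le> t" "y x = e" using IVT'[of y 0 e t] t by auto
  then show False using ne by auto
qed

lemma stays_above:
  assumes der: "\<forall>t\<ge>0. (y has_real_derivative F (y t)) (at t within {0..})"
    and ne: "\<forall>t\<ge>0. y t \<noteq> e" and "y 0 > e" and t: "t \<ge> 0"
  shows "y t > e"
proof (rule ccontr)
  assume "\<not> y t > e"
  then have "y t \<le> e" "e \<le> y 0" using assms by auto
  moreover have "continuous_on {0..t} y"
    using sol_cont[OF der] by (rule continuous_on_subset) auto
  ultimately obtain x where "0 \<le> x" "x \<le> t" "y x = e" using IVT2'[of y t e 0] t by auto
  then show False using ne by auto
qed

lemma infty_one: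
  assumes "is_solution s g u 1 y"
  shows "y_infty y = 1"
proof (rule y_infty_const, intro allI impI)
  fix t :: real assume "t \<ge> 0"
  have Qc: "continuous_on UNIV (\<lambda>x. -(u - s*x - g*x*(1-x)))" by (intro continuous_intros)
  show "y t = 1"
    using ode_unique[OF sol_der[OF assms] odeF_one Qc, of 0 t] assms \<open>t \<ge> 0\<close>
    by (auto simp: is_solution_def)
qed

lemma g_pos:
  fixes s u g x :: real
  assumes "s > 0" "u \<ge> s" "g > 0" "g < s" "x < 1"
  shows "u - s*x - g*x*(1-x) > 0"
proof (cases "x \<le> 0")
  case True
  have "g*x \<le> 0" using True assms by (simp add: mult_nonneg_nonpos)
  then have "g*x*(1-x) \<le> 0" using True by (simp add: mult_nonpos_nonneg)
  moreover have "s * x \<le> 0" using True assms by (simp add: mult_nonneg_nonpos)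
  ultimately show ?thesis using assms by linarith
next
  case False
  have "g*x < g*1" using assms by (intro mult_strict_left_mono) auto
  then have "g*x < s" using assms by linarith
  then have "g*x*(1-x) < s*(1-x)" using False assms by (intro mult_strict_right_mono) auto
  then show ?thesis using assms by (simp add: algebra_simps)
qed

lemma infty_ge:
  assumes s: "s > 0" "u \<ge> s" "g > 0" "g < s" and y0: "y0 < 1"
    and sol: "is_solution s g u y0 y"
  shows "y_infty y = 1"
proof -
  note der = sol_der[OF sol]
  have y00: "y 0 = y0" using sol by (simp add: is_solution_def)
  have Qc: "continuous_on UNIV (\<lambda>x. -(u - s*x - g*x*(1-x)))" by (intro continuous_intros)
  have ne: "\<forall>t\<ge>0. y t \<noteq> 1"
    using never_hits[OF der odeF_one Qc] y00 y0 by auto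
  have below: "\<forall>t\<ge>0. y t < 1" using stays_below[OF der ne] y00 y0 by auto
  have pos: "odeF s g u x > 0" if "x < 1" for x
    using g_pos[OF s that] that unfolding odeF_one by (simp add: mult_neg_neg)
  show ?thesis
    by (rule y_infty_lim, rule ode_conv_inc[OF der odeF_cont below])
       (use below pos in \<open>auto simp: less_imp_le\<close>)
qed

lemma infty_lt:
  assumes s: "s > 0" "g > 0" "g < s" and q: "g*r^2 - (s+g)*r + u = 0"
    and r: "0 < r" "r < 1" and y0: "y0 < 1"
    and sol: "is_solution s g u y0 y"
  shows "y_infty y = r"
proof -
  note der = sol_der[OF sol]
  have y00: "y 0 = y0" using sol by (simp add: is_solution_def)
  define r1 where "r1 = (s+g)/g - r"
  have u: "u = (s+g)*r - g*r^2" using q by simp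
  have fac: "odeF s g u x = (x - r) * ((1-x)*g*(x - r1))" for x
    unfolding odeF_def r1_def u using s by (simp add: field_simps power2_eq_square)
  have "s/g > 1" using s by simp
  then have "r < s/g" using r by linarith
  then have r1: "r1 > 1" unfolding r1_def using s r by (simp add: add_divide_distrib)
  have Qc: "continuous_on UNIV (\<lambda>x. (1-x)*g*(x - r1))" by (intro continuous_intros)
  have Qc1: "continuous_on UNIV (\<lambda>x. -(u - s*x - g*x*(1-x)))" by (intro continuous_intros)
  consider "y0 = r" | "y0 < r" | "r < y0" by linarith
  then show ?thesis
  proof cases
    case 1
    show ?thesis
      by (rule y_infty_const) (use ode_unique[OF der fac Qc, of 0] y00 1 in auto)
  next
    case 2
    have ne: "\<forall>t\<ge>0. y t \<noteq> r"
      using never_hits[OF der fac Qc] y00 2 by auto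
    have below: "\<forall>t\<ge>0. y t < r" using stays_below[OF der ne] y00 2 by auto
    have pos: "odeF s g u x > 0" if "x < r" for x
    proof -
      have "(1-x)*g*(x - r1) < 0" using that r r1 s by (intro mult_pos_neg) auto
      then show ?thesis unfolding fac using that by (simp add: mult_neg_neg)
    qed
    show ?thesis
      by (rule y_infty_lim, rule ode_conv_inc[OF der odeF_cont below])
         (use below pos in \<open>auto simp: less_imp_le\<close>)
  next
    case 3
    have ne: "\<forall>t\<ge>0. y t \<noteq> r"
      using never_hits[OF der fac Qc] y00 3 by auto
    have ne1: "\<forall>t\<ge>0. y t \<noteq> 1"
      using never_hits[OF der odeF_one Qc1] y00 y0 by auto
    have above: "\<forall>t\<ge>0. y t > r" using stays_above[OF der ne] y00 3 by auto
    have below: "\<forall>t\<ge>0. y t < 1" using stays_below[OF der ne1] y00 y0 by auto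
    have neg: "odeF s g u x < 0" if "r < x" "x < 1" for x
    proof -
      have "(1-x)*g*(x - r1) < 0" using that r r1 s by (intro mult_pos_neg) auto
      then show ?thesis unfolding fac using that by (simp add: mult_pos_neg)
    qed
    show ?thesis
      by (rule y_infty_lim, rule ode_conv_dec[OF der odeF_cont above])
         (use above below neg y00 y0 in \<open>auto simp: less_imp_le\<close>)
  qed
qed

lemma ybar2_form:
  fixes s g u :: real
  assumes "g > 0" "(g+s)^2 - 4*u*g \<ge> 0"
  shows "ybar2 s g u = ((g+s) - sqrt ((g+s)^2 - 4*u*g)) / (2*g)"
proof -
  have e: "(1 + s/g)^2 - 4*u/g = ((g+s)^2 - 4*u*g) / g^2"
    using assms by (simp add: field_simps power2_eq_square)
  have "sqrt ((1 + s/g)^2 - 4*u/g) = sqrt ((g+s)^2 - 4*u*g) / g"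
    unfolding e real_sqrt_divide using assms by simp
  then show ?thesis unfolding ybar2_def using assms by (simp add: field_simps)
qed

lemma ybar2_form2:
  fixes s g u :: real
  assumes "g > 0" "s > 0" "u > 0" "(g+s)^2 - 4*u*g \<ge> 0"
  shows "ybar2 s g u = 2*u / ((g+s) + sqrt ((g+s)^2 - 4*u*g))"
proof -
  define S where "S = sqrt ((g+s)^2 - 4*u*g)"
  have S: "S \<ge> 0" "S^2 = (g+s)^2 - 4*u*g" using assms unfolding S_def by auto
  have pos: "(g+s) + S > 0" using S assms by auto
  have "((g+s) - S) / (2*g) = 2*u / ((g+s) + S)"
    using pos assms S by (simp add: field_simps power2_eq_square)
  then show ?thesis using ybar2_form[OF assms(1,4)] unfolding S_def by simp
qed

lemma ybar2_quad:
  fixes s g u :: real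
  assumes "g > 0" "(g+s)^2 - 4*u*g \<ge> 0"
  shows "g*(ybar2 s g u)^2 - (s+g)*(ybar2 s g u) + u = 0"
proof -
  define S where "S = sqrt ((g+s)^2 - 4*u*g)"
  have S: "S^2 = (g+s)^2 - 4*u*g" using assms unfolding S_def by auto
  have "g*(((g+s) - S) / (2*g))^2 - (s+g)*(((g+s) - S) / (2*g)) + u = (S^2 - (g+s)^2 + 4*u*g)/(4*g)"
    using assms by (simp add: field_simps power2_eq_square)
  also have "\<dots> = 0" using S by simp
  finally show ?thesis unfolding ybar2_form[OF assms] S_def[symmetric] .
qed

lemma D_pos:
  fixes s u g :: real
  assumes "s > 0" "u > 0" "g > 0" "g < s^2/(4*u)"
  shows "(g+s)^2 - 4*u*g > 0"
proof -
  have "4*u*g < s^2" using assms by (simp add: field_simps)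
  moreover have "s^2 \<le> (g+s)^2" using assms by (intro power_mono) auto
  ultimately show ?thesis by linarith
qed

lemma ev_small:
  fixes s u :: real
  assumes "s > 0" "u > 0"
  shows "\<forall>\<^sub>F g in at_right 0. 0 < g \<and> g < s \<and> g < s^2/(4*u)"
  unfolding eventually_at_right_field
  by (rule exI[of _ "min s (s^2/(4*u))"]) (use assms in auto)

lemma ybar2_lim:
  fixes s u :: real
  assumes s: "s > 0" "u > 0"
  shows "((\<lambda>g. ybar2 s g u) \<longlongrightarrow> u / s) (at_right 0)"
proof -
  have ev: "\<forall>\<^sub>F g in at_right 0. 2*u / ((g+s) + sqrt ((g+s)^2 - 4*u*g)) = ybar2 s g u"
    using ev_small[OF s]
  proof eventually_elim
    case (elim g)
    then have "(g+s)^2 - 4*u*g > 0" using D_pos[OF s] by auto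
    then show ?case using ybar2_form2[of g s u] elim s by simp
  qed
  have "((\<lambda>g. 2*u / ((g+s) + sqrt ((g+s)^2 - 4*u*g))) \<longlongrightarrow> 2*u / ((0+s) + sqrt ((0+s)^2 - 4*u*0))) (at_right 0)"
    using s by (intro tendsto_intros) auto
  moreover have "2*u / ((0+s) + sqrt ((0+s)^2 - 4*u*0)) = u / s" using s by simp
  ultimately have "((\<lambda>g. 2*u / ((g+s) + sqrt ((g+s)^2 - 4*u*g))) \<longlongrightarrow> u / s) (at_right 0)" by simp
  then show ?thesis using ev by (rule Lim_transform_eventually)
qed

theorem proposition3p1:
  fixes s u y0 :: real and Y :: "real \<Rightarrow> real \<Rightarrow> real"
  assumes "s > 0" and "u > 0" and "y0 \<in> {0..1}"
    and "\<forall>\<gamma>>0. is_solution s \<gamma> u y0 (Y \<gamma>)"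
  shows "((\<lambda>\<gamma>. ybar2 s \<gamma> u) \<longlongrightarrow> u / s) (at_right 0) \<and>
         ((\<lambda>\<gamma>. y_infty (Y \<gamma>)) \<longlongrightarrow> (if y0 < 1 then min (u / s) 1 else 1)) (at_right 0)"
proof
  have s: "s > 0" "u > 0" using assms by auto
  show L1: "((\<lambda>\<gamma>. ybar2 s \<gamma> u) \<longlongrightarrow> u / s) (at_right 0)" by (rule ybar2_lim[OF s])
  note evs = ev_small[OF s]
  show "((\<lambda>\<gamma>. y_infty (Y \<gamma>)) \<longlongrightarrow> (if y0 < 1 then min (u / s) 1 else 1)) (at_right 0)"
  proof (cases "y0 < 1")
    case False
    then have y01: "y0 = 1" using assms(3) by auto
    have "\<forall>\<^sub>F g in at_right 0. y_infty (Y g) = 1"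
      using evs by eventually_elim (use assms(4) infty_one y01 in auto)
    then show ?thesis using False by (simp add: tendsto_eventually)
  next
    case True
    show ?thesis
    proof (cases "u < s")
      case False
      have m: "min (u / s) 1 = 1" using False s by (simp add: field_simps)
      have "\<forall>\<^sub>F g in at_right 0. y_infty (Y g) = 1"
        using evs by eventually_elim (use assms(4) infty_ge s False True in \<open>auto simp: not_less\<close>)
      then show ?thesis using True m by (simp add: tendsto_eventually)
    next
      case us: True
      have m: "min (u / s) 1 = u / s" using us s by (simp add: field_simps)
      have "u / s < 1" using us s by (simp add: field_simps)
      then have ev1: "\<forall>\<^sub>F g in at_right 0. ybar2 s g u < 1"
        using order_tendstoD(2)[OF L1] by blast
      have "\<forall>\<^sub>F g in at_right 0. ybar2 s g u = y_infty (Y g)"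
        using evs ev1
      proof eventually_elim
        case (elim g)
        then have D: "(g+s)^2 - 4*u*g > 0" using D_pos s by auto
        have "sqrt ((g+s)^2 - 4*u*g) \<ge> 0" using D by simp
        then have "(g+s) + sqrt ((g+s)^2 - 4*u*g) > 0" using elim s by linarith
        then have pos: "ybar2 s g u > 0" using ybar2_form2[of g s u] elim s D by simp
        show ?case
          by (rule infty_lt[symmetric, of s g _ u y0]) (use elim s assms(4) ybar2_quad[of g s u] D pos True in auto)
      qed
      then show ?thesis using L1 True m by (simp add: tendsto_cong)
    qed
  qed
qed

end
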